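(* Let $P\subset\mathbb R^d$ be a $d$-polytope, $d\geq 3$, $S$ a simplex facet of $P$ in bounded position, and $\mathcal F,\mathcal N\subseteq\operatorname{adj}(S)$ disjoint with $\mathcal F$ nonsimple. Let $v\in V_S(\mathcal F,\mathcal N;P)$ and $Q=\operatorname{conv}(P\cup\{v\})$. Then: (1) the relative interiors of $S$ and of every facet in $\mathcal N$ lie in the interior of $Q$; (2) $Q$ has facets of the following four types (and every facet of $Q$ is of one of them): (a) every facet of $P$ not in $\{S\}\cup\mathcal N\cup\mathcal F$ is a facet of $Q$ (unchanged); (b) for every ridge $R=S\cap F$ with $F\in\operatorname{adj}(S)\setminus(\mathcal F\cup\mathcal N)$, the pyramid $\operatorname{conv}(R\cup\{v\})$ is a facet of $Q$; (c) for every ridge $R=N\cap F$ with $N\in\mathcal N$ and $F$ a facet of $P$ not in $\mathcal F\cup\mathcal N\cup\{S\}$, the pyramid $\operatorname{conv}(R\cup\{v\})$ is a facet of $Q$; (d) for every $F\in\mathcal F$, $\operatorname{conv}(F\cup\{v\})$ is a facet of $Q$, and it is the pseudo-stacking of $F$ (viewed as a $(d-1)$-polytope in $H_F$) above its facet $S\cap F$ with respect to $\emptyset$ and $\mathcal N_F:=\{N\cap F: N\in\mathcal N\}$, by the point $v$.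
   Context: For a facet $F$ of a $d$-polytope $P\subset\mathbb R^d$ let $H_F=\{x:\langle x,a_F\rangle=\ell_F\}$ be its affine hull, oriented so that $P\subseteq\{x:\langle x,a_F\rangle\geq\ell_F\}$; $H_F^+$, $H_F^-$ are the open sides $\{>\}$, $\{<\}$. Two facets are adjacent if they share a ridge; $\operatorname{adj}(S)$ is the set of facets adjacent to $S$. A simplex facet is a facet combinatorially equivalent to a $(d-1)$-simplex. A facet $S$ is in bounded position if for every set of $d$ facets in $\operatorname{adj}(S)$ their hyperplanes intersect in a point of $H_S^-$. A subset $\mathcal F\subseteq\operatorname{adj}(S)$ is nonsimple if there is no pair of adjacent facets $G,G'\in\mathcal F$ having a common $(d-3)$-face with $S$. For disjoint $\mathcal F,\mathcal N\subseteq\operatorname{adj}(S)$, $V_S(\mathcal F,\mathcal N;P)$ is the set of points lying in $H_F^-$ for $F\in\mathcal N\cup\{S\}$, in $H_F$ for $F\in\mathcal F$, and in $H_F^+$ for all other facets $F$ of $P$. The pseudo-stacking of a polytope $P'$ above a simplex facet $S'$ with respect to $\mathcal F',\mathcal N'$ is $\operatorname{conv}(P'\cup\{w\})$ for a point $w\in V_{S'}(\mathcal F',\mathcal N';P')$ (computed inside the affine hull of $P'$). *)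

theory Defs
  imports "HOL-Analysis.Analysis"
begin

text \<open>All notions are relative to the affine hull of the polytope, so that they can be
applied both to a full-dimensional polytope in the ambient space and to a facet
viewed as a polytope in its own affine hull.\<close>

definition facet_ineq :: "'a::euclidean_space set \<Rightarrow> 'a set \<Rightarrow> 'a \<Rightarrow> real \<Rightarrow> bool" where
  "facet_ineq P F a b \<longleftrightarrow> a \<noteq> 0 \<and> affine hull P \<inter> {x. a \<bullet> x = b} = affine hull F
      \<and> P \<subseteq> {x. a \<bullet> x \<ge> b}"

definition Hplus :: "'a::euclidean_space set \<Rightarrow> 'a set \<Rightarrow> 'a set" where
  "Hplus P F = {x \<in> affine hull P. \<exists>a b. facet_ineq P F a b \<and> a \<bullet> x > b}"

definition Hminus :: "'a::euclidean_space set \<Rightarrow> 'a set \<Rightarrow> 'a set" where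
  "Hminus P F = {x \<in> affine hull P. \<exists>a b. facet_ineq P F a b \<and> a \<bullet> x < b}"

definition adjacent_facets :: "'a::euclidean_space set \<Rightarrow> 'a set \<Rightarrow> 'a set \<Rightarrow> bool" where
  "adjacent_facets P F G \<longleftrightarrow> F facet_of P \<and> G facet_of P \<and> aff_dim (F \<inter> G) = aff_dim P - 2"

definition adj :: "'a::euclidean_space set \<Rightarrow> 'a set \<Rightarrow> 'a set set" where
  "adj P S = {F. adjacent_facets P S F}"

definition simplex_facet :: "'a::euclidean_space set \<Rightarrow> 'a set \<Rightarrow> bool" where
  "simplex_facet P S \<longleftrightarrow> S facet_of P \<and> (aff_dim P - 1) simplex S"

definition bounded_position :: "'a::euclidean_space set \<Rightarrow> 'a set \<Rightarrow> bool" where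
  "bounded_position P S \<longleftrightarrow>
     (\<forall>\<G>. \<G> \<subseteq> adj P S \<and> card \<G> = nat (aff_dim P) \<longrightarrow>
        (\<exists>x. (\<Inter>G\<in>\<G>. affine hull G) = {x} \<and> x \<in> Hminus P S))"

definition nonsimple :: "'a::euclidean_space set \<Rightarrow> 'a set \<Rightarrow> 'a set set \<Rightarrow> bool" where
  "nonsimple P S \<F> \<longleftrightarrow>
     \<not> (\<exists>G\<in>\<F>. \<exists>G'\<in>\<F>. adjacent_facets P G G' \<and>
          (\<exists>K. K face_of G \<and> K face_of G' \<and> K face_of S \<and> aff_dim K = aff_dim P - 3))"

definition Vregion :: "'a::euclidean_space set \<Rightarrow> 'a set \<Rightarrow> 'a set set \<Rightarrow> 'a set set \<Rightarrow> 'a set" where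
  "Vregion P S \<F> \<N> = {x \<in> affine hull P.
      (\<forall>F \<in> \<N> \<union> {S}. x \<in> Hminus P F) \<and>
      (\<forall>F \<in> \<F>. x \<in> affine hull F) \<and>
      (\<forall>F. F facet_of P \<and> F \<notin> \<N> \<union> \<F> \<union> {S} \<longrightarrow> x \<in> Hplus P F)}"

definition pseudo_stacking ::
  "'a::euclidean_space set \<Rightarrow> 'a set \<Rightarrow> 'a set set \<Rightarrow> 'a set set \<Rightarrow> 'a \<Rightarrow> 'a set \<Rightarrow> bool" where
  "pseudo_stacking P' S' \<F>' \<N>' w Q \<longleftrightarrow>
     polytope P' \<and> simplex_facet P' S' \<and> \<F>' \<subseteq> adj P' S' \<and> \<N>' \<subseteq> adj P' S' \<and>
     \<F>' \<inter> \<N>' = {} \<and> w \<in> Vregion P' S' \<F>' \<N>' \<and> Q = convex hull (insert w P')"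

end

theory Submission
  imports Defs
begin

lemma hyp_span:
  fixes c1 c2 c3 y0 :: "'a::euclidean_space"
  assumes "c1 \<bullet> y0 = d1" "c2 \<bullet> y0 = d2"
    and H: "\<And>x. c1 \<bullet> x = d1 \<Longrightarrow> c2 \<bullet> x = d2 \<Longrightarrow> c3 \<bullet> x = d3"
  shows "\<exists>\<alpha> \<beta>. c3 = \<alpha> *\<^sub>R c1 + \<beta> *\<^sub>R c2 \<and> d3 = \<alpha> * d1 + \<beta> * d2"
proof -
  obtain y z where y: "y \<in> span {c1,c2}" and z: "\<And>w. w \<in> span {c1,c2} \<Longrightarrow> orthogonal z w"
    and c3: "c3 = y + z"
    using orthogonal_subspace_decomp_exists by blast
  have "c1 \<bullet> z = 0" "c2 \<bullet> z = 0" using z[of c1] z[of c2]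
    by (auto simp: span_base orthogonal_def inner_commute)
  then have "c3 \<bullet> (y0 + z) = d3" using assms by (intro H) (auto simp: inner_add_right)
  moreover have "c3 \<bullet> y0 = d3" by (rule H) (use assms in auto)
  ultimately have "c3 \<bullet> z = 0" by (simp add: inner_add_right)
  moreover have "y \<bullet> z = 0" using z[OF y] by (simp add: orthogonal_def inner_commute)
  ultimately have "z \<bullet> z = 0" using c3 by (simp add: inner_add_left)
  hence "z = 0" by simp
  then have "c3 \<in> span {c1,c2}" using c3 y by simp
  then obtain \<alpha> \<beta> where e: "c3 = \<alpha> *\<^sub>R c1 + \<beta> *\<^sub>R c2"
    by (auto simp: span_breakdown_eq span_singleton) (metis add.commute diff_eq_eq)
  have "d3 = c3 \<bullet> y0" using \<open>c3 \<bullet> y0 = d3\<close> by simp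
  also have "\<dots> = \<alpha> * d1 + \<beta> * d2" using e assms(1,2) by (simp add: inner_add_left)
  finally show ?thesis using e by blast
qed



lemma hull_cap:
  fixes P :: "'a::euclidean_space set"
  assumes cP: "convex P" and Pne: "P \<noteq> {}" and Ple: "P \<subseteq> {x. a \<bullet> x \<le> b}" and v: "a \<bullet> v \<le> b"
  shows "convex hull (insert v P) \<subseteq> {x. a \<bullet> x \<le> b}"
    and "a \<bullet> v < b \<Longrightarrow> convex hull (insert v P) \<inter> {x. a \<bullet> x = b} = P \<inter> {x. a \<bullet> x = b}"
    and "a \<bullet> v = b \<Longrightarrow> convex hull (insert v P) \<inter> {x. a \<bullet> x = b} = convex hull (insert v (P \<inter> {x. a \<bullet> x = b}))"
proof -
  have CH: "convex hull (insert v P) = {x. \<exists>u\<ge>0. \<exists>w\<ge>0. \<exists>p. u + w = 1 \<and> p \<in> P \<and> x = u *\<^sub>R v + w *\<^sub>R p}"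
    using convex_hull_insert[OF Pne, of v] convex_hull_eq[of P] cP by simp
  show "convex hull (insert v P) \<subseteq> {x. a \<bullet> x \<le> b}"
    using Ple v by (intro hull_minimal) (auto simp: convex_halfspace_le)
  show "a \<bullet> v < b \<Longrightarrow> convex hull (insert v P) \<inter> {x. a \<bullet> x = b} = P \<inter> {x. a \<bullet> x = b}"
  proof
    assume av: "a \<bullet> v < b"
    show "convex hull (insert v P) \<inter> {x. a \<bullet> x = b} \<subseteq> P \<inter> {x. a \<bullet> x = b}"
    proof
      fix x assume "x \<in> convex hull (insert v P) \<inter> {x. a \<bullet> x = b}"
      then obtain u w p where uw: "u \<ge> 0" "w \<ge> 0" "u + w = 1" "p \<in> P" "x = u *\<^sub>R v + w *\<^sub>R p"
        and ax: "a \<bullet> x = b" using CH by auto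
      have ap: "a \<bullet> p \<le> b" using Ple uw by auto
      have e: "a \<bullet> x = u * (a \<bullet> v) + w * (a \<bullet> p)" using uw by (simp add: inner_add_right)
      have "u = 0"
      proof (rule ccontr)
        assume "u \<noteq> 0" then have "u > 0" using uw by simp
        then have "u * (a \<bullet> v) < u * b" using av by simp
        moreover have "w * (a \<bullet> p) \<le> w * b" using ap uw by (simp add: mult_left_mono)
        ultimately have "a \<bullet> x < (u + w) * b" using e by (simp add: algebra_simps)
        then show False using ax uw by simp
      qed
      then show "x \<in> P \<inter> {x. a \<bullet> x = b}" using uw ax by simp
    qed
    show "P \<inter> {x. a \<bullet> x = b} \<subseteq> convex hull (insert v P) \<inter> {x. a \<bullet> x = b}"
      using hull_subset by fastforce
  qed
  show "a \<bullet> v = b \<Longrightarrow> convex hull (insert v P) \<inter> {x. a \<bullet> x = b} = convex hull (insert v (P \<inter> {x. a \<bullet> x = b}))"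
  proof
    assume av: "a \<bullet> v = b"
    show "convex hull (insert v P) \<inter> {x. a \<bullet> x = b} \<subseteq> convex hull (insert v (P \<inter> {x. a \<bullet> x = b}))"
    proof
      fix x assume "x \<in> convex hull (insert v P) \<inter> {x. a \<bullet> x = b}"
      then obtain u w p where uw: "u \<ge> 0" "w \<ge> 0" "u + w = 1" "p \<in> P" "x = u *\<^sub>R v + w *\<^sub>R p"
        and ax: "a \<bullet> x = b" using CH by auto
      have e: "a \<bullet> x = u * (a \<bullet> v) + w * (a \<bullet> p)" using uw by (simp add: inner_add_right)
      show "x \<in> convex hull (insert v (P \<inter> {x. a \<bullet> x = b}))"
      proof (cases "w = 0")
        case True
        then have "x = v" using uw by simp
        then show ?thesis by (simp add: hull_inc)
      next
        case False
        have u: "u = 1 - w" using uw by simp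
        have "b = (1 - w) * b + w * (a \<bullet> p)" using e ax av u by simp
        then have "a \<bullet> p = b" using False by (auto simp: algebra_simps)
        then have "p \<in> convex hull (insert v (P \<inter> {x. a \<bullet> x = b}))" using uw by (simp add: hull_inc)
        moreover have "v \<in> convex hull (insert v (P \<inter> {x. a \<bullet> x = b}))" by (simp add: hull_inc)
        ultimately show ?thesis using uw convexD[OF convex_convex_hull] by metis
      qed
    qed
    have "convex hull (insert v (P \<inter> {x. a \<bullet> x = b})) \<subseteq> convex hull (insert v P)"
      by (intro hull_mono) auto
    moreover have "convex hull (insert v (P \<inter> {x. a \<bullet> x = b})) \<subseteq> {x. a \<bullet> x = b}"
      using av by (intro hull_minimal) (auto simp: convex_hyperplane)
    ultimately show "convex hull (insert v (P \<inter> {x. a \<bullet> x = b})) \<subseteq> convex hull (insert v P) \<inter> {x. a \<bullet> x = b}"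
      by blast
  qed
qed

lemma loc_move:
  fixes H :: "'a::euclidean_space set set"
  assumes fin: "finite H" and PH: "P = \<Inter>H" and hs: "\<And>h. h \<in> H \<Longrightarrow> h = {x. ah h \<bullet> x \<le> bh h}"
    and r: "r \<in> P" and act: "\<And>h. h \<in> H \<Longrightarrow> ah h \<bullet> r = bh h \<Longrightarrow> ah h \<bullet> w \<le> 0"
  shows "\<exists>t>0. r + t *\<^sub>R w \<in> P"
proof -
  define U where "U = \<Inter>((\<lambda>h. {x. ah h \<bullet> x < bh h}) ` {h\<in>H. ah h \<bullet> r \<noteq> bh h})"
  have "open U" unfolding U_def using fin by (intro open_INT) (auto simp: open_halfspace_lt)
  moreover have "r \<in> U"
  proof -
    have "r \<in> {x. ah h \<bullet> x < bh h}" if "h \<in> H" "ah h \<bullet> r \<noteq> bh h" for h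
    proof -
      have "r \<in> h" using r PH that by blast
      then have "ah h \<bullet> r \<le> bh h" using hs[OF that(1)] by blast
      then show ?thesis using that by simp
    qed
    then show ?thesis unfolding U_def by blast
  qed
  ultimately obtain e where e: "e > 0" "ball r e \<subseteq> U" using open_contains_ball by blast
  define t where "t = e / (2 * (norm w + 1))"
  have np: "2 * (norm w + 1) > 0" by (smt (verit) norm_ge_zero)
  have t: "t > 0" unfolding t_def by (rule divide_pos_pos) (use e np in auto)
  have "t * norm w < e"
  proof -
    have "t * norm w \<le> t * (norm w + 1)" using t by simp
    also have "\<dots> = e / 2" unfolding t_def using np by (simp add: field_simps)
    finally show ?thesis using e by simp
  qed
  then have "r + t *\<^sub>R w \<in> ball r e" using t by (simp add: dist_norm)
  then have inU: "r + t *\<^sub>R w \<in> U" using e by blast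
  have "r + t *\<^sub>R w \<in> h" if h: "h \<in> H" for h
  proof (cases "ah h \<bullet> r = bh h")
    case True
    have "ah h \<bullet> (r + t *\<^sub>R w) = bh h + t * (ah h \<bullet> w)" using True by (simp add: inner_add_right)
    moreover have "t * (ah h \<bullet> w) \<le> 0" using act[OF h True] t by (simp add: mult_nonneg_nonpos)
    ultimately have "ah h \<bullet> (r + t *\<^sub>R w) \<le> bh h" by simp
    then show ?thesis by (subst hs[OF h]) simp
  next
    case False
    then have "ah h \<bullet> (r + t *\<^sub>R w) < bh h" using inU h unfolding U_def by blast
    then show ?thesis by (subst hs[OF h]) simp
  qed
  then show ?thesis using t PH by blast
qed

locale fdp =
  fixes P :: "'a::euclidean_space set"
  assumes polyP: "polytope P" and dimP: "aff_dim P = int DIM('a)"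
begin

lemma affP: "affine hull P = UNIV" using dimP aff_dim_eq_full by auto
lemma convP: "convex P" using polyP polytope_imp_convex by auto
lemma polyhP: "polyhedron P" using polytope_imp_polyhedron polyP by auto
lemma Pne: "P \<noteq> {}" using dimP by auto

definition isn :: "'a set \<Rightarrow> 'a \<Rightarrow> real \<Rightarrow> bool" where
 "isn F a b \<longleftrightarrow> a \<noteq> 0 \<and> P \<subseteq> {x. a \<bullet> x \<le> b} \<and> F = P \<inter> {x. a \<bullet> x = b}"

lemma nrm_ex: "F facet_of P \<Longrightarrow> \<exists>a b. isn F a b"
  using facet_of_polyhedron[OF polyhP] unfolding isn_def by metis

lemma not_sub_hyp: "a \<noteq> 0 \<Longrightarrow> \<not> P \<subseteq> {x. a \<bullet> x = b}"
proof
  assume "a \<noteq> 0" "P \<subseteq> {x. a \<bullet> x = b}"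
  then have "aff_dim P \<le> aff_dim {x. a \<bullet> x = b}" by (meson aff_dim_subset)
  then show False using dimP \<open>a \<noteq> 0\<close> by simp
qed

lemma facet_dim: "F facet_of P \<Longrightarrow> aff_dim F = int DIM('a) - 1"
  unfolding facet_of_def using dimP by auto

lemma facet_ne: "F facet_of P \<Longrightarrow> F \<noteq> {}"
  using facet_of_def by auto

lemma facet_sub_eq: "F facet_of P \<Longrightarrow> G facet_of P \<Longrightarrow> F \<subseteq> G \<Longrightarrow> F = G"
proof (rule ccontr)
  assume a: "F facet_of P" "G facet_of P" "F \<subseteq> G" "F \<noteq> G"
  have "F face_of G" using face_of_subset[of F P G] a facet_of_imp_face_of facet_of_imp_subset by blast
  then have "aff_dim F < aff_dim G"
    using face_of_aff_dim_lt[of G F] a face_of_imp_convex facet_of_imp_face_of by blast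
  then show False using a facet_dim by simp
qed

lemma isn_facet_aff: assumes F: "F facet_of P" and n: "isn F a b"
  shows "affine hull F = {x. a \<bullet> x = b}"
proof -
  have "affine hull F \<subseteq> {x. a \<bullet> x = b}" using n unfolding isn_def
    by (intro hull_minimal) (auto simp: affine_hyperplane)
  moreover have "affine hull F \<noteq> {}" using F facet_of_def by auto
  moreover have "aff_dim (affine hull F) = aff_dim {x. a \<bullet> x = b}"
    using F n facet_dim by (simp add: isn_def)
  ultimately show ?thesis using affine_dim_equal[of "affine hull F" "{x. a \<bullet> x = b}"]
    affine_affine_hull affine_hyperplane by blast
qed

lemma exists_below: "a \<noteq> 0 \<Longrightarrow> P \<subseteq> {x. a \<bullet> x \<le> b} \<Longrightarrow> \<exists>p\<in>P. a \<bullet> p < b"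
  using not_sub_hyp[of a b] by force

lemma isn_prop: assumes F: "F facet_of P" and n: "isn F a b" and n': "isn F a' b'"
  shows "\<exists>l>0. a' = l *\<^sub>R a \<and> b' = l * b"
proof -
  have A: "{x. a \<bullet> x = b} = {x. a' \<bullet> x = b'}"
    using isn_facet_aff[OF F n] isn_facet_aff[OF F n'] by simp
  obtain y0 where "y0 \<in> F" using facet_ne[OF F] by auto
  then have y0: "a \<bullet> y0 = b" using n by (auto simp: isn_def)
  obtain \<alpha> \<beta> where e: "a' = \<alpha> *\<^sub>R a + \<beta> *\<^sub>R a" "b' = \<alpha> * b + \<beta> * b"
    using hyp_span[of a y0 b a b a' b'] y0 A by blast
  define l where "l = \<alpha> + \<beta>"
  have e2: "a' = l *\<^sub>R a" "b' = l * b" using e by (auto simp: l_def algebra_simps)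
  have "\<exists>p\<in>P. a \<bullet> p < b" using exists_below n unfolding isn_def by blast
  then obtain p where p: "p \<in> P" "a \<bullet> p < b" by blast
  have "a' \<bullet> p \<le> b'" using n' p by (auto simp: isn_def)
  then have "l * (a \<bullet> p) \<le> l * b" using e2 by simp
  then have "l \<ge> 0" using p(2) by (smt (verit) mult_le_cancel_left)
  moreover have "l \<noteq> 0" using n' e2 by (auto simp: isn_def)
  ultimately have "l > 0" by simp
  then show ?thesis using e2 by blast
qed

lemma fi_to_isn: assumes F: "F facet_of P" and fi: "facet_ineq P F a b"
  shows "isn F (-a) (-b)"
proof -
  have F1: "F = affine hull F \<inter> P"
    using face_of_imp_eq_affine_Int[OF convP] F facet_of_imp_face_of by blast
  show ?thesis using fi unfolding isn_def facet_ineq_def affP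
    by (subst F1) auto
qed

lemma isn_to_fi: assumes F: "F facet_of P" and n: "isn F a b"
  shows "facet_ineq P F (-a) (-b)"
  using n isn_facet_aff[OF F n] unfolding isn_def facet_ineq_def affP by auto

lemma FI: assumes F: "F facet_of P" and n: "isn F a b"
  shows "x \<in> Hminus P F \<longleftrightarrow> a \<bullet> x > b" "x \<in> Hplus P F \<longleftrightarrow> a \<bullet> x < b"
    "x \<in> affine hull F \<longleftrightarrow> a \<bullet> x = b"
proof -
  have key: "\<exists>l>0. a = l *\<^sub>R (-a') \<and> b = l * (-b')" if "facet_ineq P F a' b'" for a' b'
    using isn_prop[OF F fi_to_isn[OF F that] n] .
  show "x \<in> Hminus P F \<longleftrightarrow> a \<bullet> x > b"
  proof
    assume "x \<in> Hminus P F"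
    then obtain a' b' where "facet_ineq P F a' b'" "a' \<bullet> x < b'" unfolding Hminus_def by auto
    then obtain l where "l > 0" "a = l *\<^sub>R (-a')" "b = l * (-b')" using key by blast
    then show "a \<bullet> x > b" using \<open>a' \<bullet> x < b'\<close> by simp
  next
    assume "a \<bullet> x > b"
    then show "x \<in> Hminus P F" unfolding Hminus_def affP using isn_to_fi[OF F n] by force
  qed
  show "x \<in> Hplus P F \<longleftrightarrow> a \<bullet> x < b"
  proof
    assume "x \<in> Hplus P F"
    then obtain a' b' where "facet_ineq P F a' b'" "a' \<bullet> x > b'" unfolding Hplus_def by auto
    then obtain l where "l > 0" "a = l *\<^sub>R (-a')" "b = l * (-b')" using key by blast
    then show "a \<bullet> x < b" using \<open>a' \<bullet> x > b'\<close> by simp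
  next
    assume "a \<bullet> x < b"
    then show "x \<in> Hplus P F" unfolding Hplus_def affP using isn_to_fi[OF F n] by force
  qed
  show "x \<in> affine hull F \<longleftrightarrow> a \<bullet> x = b" using isn_facet_aff[OF F n] by auto
qed


lemma comb_eq: "(\<mu> *\<^sub>R ci + \<nu> *\<^sub>R cj) \<bullet> x - (\<mu> * di + \<nu> * dj) = \<mu> * (ci \<bullet> x - di) + \<nu> * (cj \<bullet> x - dj)"
  by (simp add: algebra_simps inner_add_left)

lemma pos_sub: assumes "isn Fk ck dk" "isn Fi ci di" "isn Fj cj dj"
  "ck = \<mu> *\<^sub>R ci + \<nu> *\<^sub>R cj" "dk = \<mu> * di + \<nu> * dj" "\<mu> > 0" "\<nu> \<ge> 0"
  shows "Fk \<subseteq> Fi"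
proof
  fix x assume "x \<in> Fk"
  then have x: "x \<in> P" "ck \<bullet> x = dk" using assms(1) by (auto simp: isn_def)
  have le: "ci \<bullet> x \<le> di" "cj \<bullet> x \<le> dj" using x assms(2,3) by (auto simp: isn_def)
  have e: "ck \<bullet> x - dk = \<mu> * (ci \<bullet> x - di) + \<nu> * (cj \<bullet> x - dj)"
    using assms(4,5) comb_eq by simp
  have "\<nu> * (cj \<bullet> x - dj) \<le> 0" using le assms(7) by (simp add: mult_nonneg_nonpos)
  hence "\<mu> * (ci \<bullet> x - di) \<ge> 0" using e x by linarith
  hence "ci \<bullet> x - di \<ge> 0" using assms(6) by (simp add: zero_le_mult_iff)
  then show "x \<in> Fi" using le x assms(2) by (auto simp: isn_def)
qed

lemma neg_false: assumes "isn Fk ck dk" "isn Fi ci di" "isn Fj cj dj"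
  "ck = \<alpha> *\<^sub>R ci + \<beta> *\<^sub>R cj" "dk = \<alpha> * di + \<beta> * dj" "\<alpha> \<le> 0" "\<beta> \<le> 0"
  shows False
proof -
  have "P \<subseteq> {x. ck \<bullet> x = dk}"
  proof
    fix x assume x: "x \<in> P"
    have le: "ci \<bullet> x \<le> di" "cj \<bullet> x \<le> dj" "ck \<bullet> x \<le> dk" using x assms(1-3) by (auto simp: isn_def)
    have e: "ck \<bullet> x - dk = \<alpha> * (ci \<bullet> x - di) + \<beta> * (cj \<bullet> x - dj)"
      using assms(4,5) comb_eq by simp
    have "\<alpha> * (ci \<bullet> x - di) \<ge> 0" "\<beta> * (cj \<bullet> x - dj) \<ge> 0"
      using le assms(6,7) by (simp_all add: mult_nonpos_nonpos)
    then show "x \<in> {x. ck \<bullet> x = dk}" using e le by simp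
  qed
  then show False using not_sub_hyp assms(1) by (auto simp: isn_def)
qed

lemma par_eq: assumes F1: "F1 facet_of P" and F2: "F2 facet_of P"
  and n1: "isn F1 c1 d1" and n2: "isn F2 c2 d2" and e: "c2 = \<alpha> *\<^sub>R c1 + \<beta> *\<^sub>R c1" "d2 = \<alpha> * d1 + \<beta> * d1"
  shows "F1 = F2"
proof -
  define l where "l = \<alpha> + \<beta>"
  have e2: "c2 = l *\<^sub>R c1 + 0 *\<^sub>R c1" "d2 = l * d1 + 0 * d1" using e by (auto simp: l_def algebra_simps)
  have "l > 0" using neg_false[OF n2 n1 n1 e2] by force
  then have "F2 \<subseteq> F1" using pos_sub[OF n2 n1 n1 e2] by simp
  then show ?thesis using facet_sub_eq F1 F2 by blast
qed

lemma three_facets: assumes D: "DIM('a) \<ge> 2"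
  and S: "S facet_of P" and F: "F facet_of P" and G: "G facet_of P"
  and d: "S \<noteq> F" "S \<noteq> G" "F \<noteq> G" and eq: "S \<inter> F = S \<inter> G"
  and dim: "aff_dim (S \<inter> F) = int DIM('a) - 2"
  shows False
proof -
  obtain cs ds where ns: "isn S cs ds" using nrm_ex S by blast
  obtain cf df where nf: "isn F cf df" using nrm_ex F by blast
  obtain cg dg where ng: "isn G cg dg" using nrm_ex G by blast
  define R where "R = S \<inter> F"
  have Rne: "R \<noteq> {}" using dim D R_def by auto
  then obtain y0 where y0: "y0 \<in> R" by auto
  have y0s: "cs \<bullet> y0 = ds" "cf \<bullet> y0 = df" using y0 ns nf by (auto simp: R_def isn_def)
  define HSF where "HSF = {x. cs \<bullet> x = ds} \<inter> {x. cf \<bullet> x = df}"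
  have affH: "affine HSF" unfolding HSF_def by (intro affine_Int affine_hyperplane)
  have RH: "affine hull R \<subseteq> HSF" using ns nf unfolding HSF_def R_def isn_def
    by (intro hull_minimal affine_Int affine_hyperplane) auto
  have csnz: "cs \<noteq> 0" using ns by (simp add: isn_def)
  have "aff_dim HSF \<le> aff_dim {x. cs \<bullet> x = ds}" unfolding HSF_def by (meson aff_dim_subset inf_le1)
  then have le1: "aff_dim HSF \<le> int DIM('a) - 1" using csnz by simp
  have ne1: "aff_dim HSF \<noteq> int DIM('a) - 1"
  proof
    assume a: "aff_dim HSF = int DIM('a) - 1"
    have "HSF = {x. cs \<bullet> x = ds}"
      using affine_dim_equal[of HSF "{x. cs \<bullet> x = ds}"] affH a csnz y0s
      by (auto simp: HSF_def affine_hyperplane)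
    then have "\<And>x. cs \<bullet> x = ds \<Longrightarrow> cs \<bullet> x = ds \<Longrightarrow> cf \<bullet> x = df" unfolding HSF_def by blast
    then obtain \<alpha> \<beta> where "cf = \<alpha> *\<^sub>R cs + \<beta> *\<^sub>R cs" "df = \<alpha> * ds + \<beta> * ds"
      using hyp_span[of cs y0 ds cs ds cf df] y0s by blast
    then have "S = F" using par_eq[OF S F ns nf] by blast
    then show False using d by simp
  qed
  have "aff_dim (affine hull R) = int DIM('a) - 2" using dim by (simp add: R_def)
  moreover have "aff_dim (affine hull R) \<le> aff_dim HSF" using RH by (meson aff_dim_subset)
  ultimately have "aff_dim (affine hull R) = aff_dim HSF" using le1 ne1 by linarith
  then have RH2: "affine hull R = HSF"
    using affine_dim_equal[of "affine hull R" HSF] affH RH Rne by auto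
  have "affine hull R \<subseteq> affine hull G" using eq unfolding R_def by (intro hull_mono) auto
  then have sub: "HSF \<subseteq> {x. cg \<bullet> x = dg}" using RH2 isn_facet_aff[OF G ng] by simp
  obtain \<alpha> \<beta> where e: "cg = \<alpha> *\<^sub>R cs + \<beta> *\<^sub>R cf" "dg = \<alpha> * ds + \<beta> * df"
    using hyp_span[of cs y0 ds cf df cg dg] y0s sub unfolding HSF_def by blast
  consider "\<alpha> > 0" "\<beta> \<ge> 0" | "\<alpha> \<ge> 0" "\<beta> > 0" | "\<alpha> \<le> 0" "\<beta> \<le> 0" | "\<alpha> > 0" "\<beta> < 0"
    | "\<alpha> < 0" "\<beta> > 0" by linarith
  then show False
  proof cases
    case 1
    then have "G \<subseteq> S" using pos_sub[OF ng ns nf e] by simp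
    then show False using facet_sub_eq[OF G S] d by auto
  next
    case 2
    have e': "cg = \<beta> *\<^sub>R cf + \<alpha> *\<^sub>R cs" "dg = \<beta> * df + \<alpha> * ds" using e by (auto simp: algebra_simps)
    have "G \<subseteq> F" using pos_sub[OF ng nf ns e'] 2 by simp
    then show False using facet_sub_eq[OF G F] d by auto
  next
    case 3
    then show False using neg_false[OF ng ns nf e] by simp
  next
    case 4
    have e': "cs = (1/\<alpha>) *\<^sub>R cg + (-\<beta>/\<alpha>) *\<^sub>R cf" "ds = (1/\<alpha>) * dg + (-\<beta>/\<alpha>) * df"
      using e 4 by (auto simp: algebra_simps field_simps)
    have "\<beta>/\<alpha> \<le> 0" using 4 by (simp add: divide_nonpos_pos)
    then have "S \<subseteq> G" using pos_sub[OF ns ng nf e'] 4 by simp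
    then show False using facet_sub_eq[OF S G] d by auto
  next
    case 5
    have e': "cf = (1/\<beta>) *\<^sub>R cg + (-\<alpha>/\<beta>) *\<^sub>R cs" "df = (1/\<beta>) * dg + (-\<alpha>/\<beta>) * ds"
      using e 5 by (auto simp: algebra_simps field_simps)
    have "\<alpha>/\<beta> \<le> 0" using 5 by (simp add: divide_nonpos_pos)
    then have "F \<subseteq> G" using pos_sub[OF nf ng ns e'] 5 by simp
    then show False using facet_sub_eq[OF F G] d by auto
  qed
qed


lemma rep: obtains H ah bh where "finite H" "P = \<Inter>H"
  "\<And>h. h \<in> H \<Longrightarrow> ah h \<noteq> 0 \<and> h = {x. ah h \<bullet> x \<le> bh h}"
  "\<And>h. h \<in> H \<Longrightarrow> (P \<inter> {x. ah h \<bullet> x = bh h}) facet_of P"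
proof -
  obtain F where "finite F" and seq: "P = affine hull P \<inter> \<Inter>F"
             and faces: "\<And>h. h \<in> F \<Longrightarrow> \<exists>a b. a \<noteq> 0 \<and> h = {x. a \<bullet> x \<le> b}"
             and min: "\<And>F'. F' \<subset> F \<Longrightarrow> P \<subset> (affine hull P) \<inter> \<Inter>F'"
    using polyhP by (simp add: polyhedron_Int_affine_minimal) meson
  then obtain a b where ab: "\<And>h. h \<in> F \<Longrightarrow> a h \<noteq> 0 \<and> h = {x. a h \<bullet> x \<le> b h}"
    by metis
  have "\<And>h. h \<in> F \<Longrightarrow> (P \<inter> {x. a h \<bullet> x = b h}) facet_of P"
    using facet_of_polyhedron_explicit [OF \<open>finite F\<close> seq ab min] by blast
  moreover have "P = \<Inter>F" using seq affP by simp
  ultimately show ?thesis using that[of F a b] \<open>finite F\<close> ab by blast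
qed

end



locale fdpv = fdp P for P :: "'a::euclidean_space set" +
  fixes v :: 'a
  assumes D3: "DIM('a) \<ge> 3"
begin

definition QQ where "QQ = convex hull (insert v P)"

lemma polyQ: "polytope QQ"
proof -
  obtain V where V: "finite V" "P = convex hull V" using polyP unfolding polytope_def by blast
  have "QQ = convex hull (insert v V)" proof -
    have "QQ = convex hull (insert v (convex hull V))" unfolding QQ_def using V(2) by simp
    then show ?thesis using hull_insert[of convex v V] by simp
  qed
  then show ?thesis using V(1) by (simp add: polytope_convex_hull)
qed

lemma convQ: "convex QQ" unfolding QQ_def by simp
lemma PQ: "P \<subseteq> QQ" unfolding QQ_def by (meson hull_subset subset_insertI subset_trans)
lemma vQ: "v \<in> QQ" unfolding QQ_def by (simp add: hull_inc)
lemma dimQ: "aff_dim QQ = int DIM('a)"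
proof -
  have "aff_dim P \<le> aff_dim QQ" using PQ by (meson aff_dim_subset)
  then show ?thesis using dimP aff_dim_le_DIM[of QQ] by simp
qed
lemma polyhQ: "polyhedron QQ" using polyQ polytope_imp_polyhedron by auto

lemma hc: assumes "isn F a b" "a \<bullet> v \<le> b"
  shows "QQ \<subseteq> {x. a \<bullet> x \<le> b}"
    and "a \<bullet> v < b \<Longrightarrow> QQ \<inter> {x. a \<bullet> x = b} = P \<inter> {x. a \<bullet> x = b}"
    and "a \<bullet> v = b \<Longrightarrow> QQ \<inter> {x. a \<bullet> x = b} = convex hull (insert v (P \<inter> {x. a \<bullet> x = b}))"
  using hull_cap[OF convP Pne _ assms(2)] assms(1) unfolding QQ_def isn_def by auto

lemma beneath_facet: assumes F: "F facet_of P" and n: "isn F a b" and av: "a \<bullet> v < b"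
  shows "F facet_of QQ"
proof -
  have e: "QQ \<inter> {x. a \<bullet> x = b} = F" using hc(2)[OF n _ av] av n by (auto simp: isn_def)
  have "(QQ \<inter> {x. a \<bullet> x = b}) face_of QQ"
    using face_of_Int_supporting_hyperplane_le[OF convQ, of a b] hc(1)[OF n] av by auto
  then show ?thesis unfolding facet_of_def using e facet_ne[OF F] facet_dim[OF F] dimQ by auto
qed

lemma on_facet: assumes F: "F facet_of P" and n: "isn F a b" and av: "a \<bullet> v = b"
  shows "convex hull (insert v F) facet_of QQ"
proof -
  have e: "QQ \<inter> {x. a \<bullet> x = b} = convex hull (insert v F)" using hc(3)[OF n _ av] av n by (auto simp: isn_def)
  have "(QQ \<inter> {x. a \<bullet> x = b}) face_of QQ"
    using face_of_Int_supporting_hyperplane_le[OF convQ, of a b] hc(1)[OF n] av by auto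
  moreover have "v \<in> affine hull F" using isn_facet_aff[OF F n] av by simp
  then have "aff_dim (convex hull (insert v F)) = aff_dim F" by (simp add: aff_dim_insert aff_dim_convex_hull)
  ultimately show ?thesis unfolding facet_of_def using e facet_ne[OF F] facet_dim[OF F] dimQ by auto
qed

lemma ridge_facet: assumes F1: "F1 facet_of P" and F2: "F2 facet_of P"
  and n1: "isn F1 c1 d1" and n2: "isn F2 c2 d2" and v1: "c1 \<bullet> v > d1" and v2: "c2 \<bullet> v < d2"
  and dim: "aff_dim (F1 \<inter> F2) = int DIM('a) - 2"
  shows "convex hull (insert v (F1 \<inter> F2)) facet_of QQ"
proof -
  define m1 where "m1 = d2 - c2 \<bullet> v"
  define m2 where "m2 = c1 \<bullet> v - d1"
  have m: "m1 > 0" "m2 > 0" using v1 v2 by (auto simp: m1_def m2_def)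
  define c where "c = m1 *\<^sub>R c1 + m2 *\<^sub>R c2"
  define e where "e = m1 * d1 + m2 * d2"
  have ce: "c \<bullet> x - e = m1 * (c1 \<bullet> x - d1) + m2 * (c2 \<bullet> x - d2)" for x
    unfolding c_def e_def by (rule comb_eq)
  have Ple: "P \<subseteq> {x. c \<bullet> x \<le> e}"
  proof
    fix x assume "x \<in> P"
    then have "c1 \<bullet> x \<le> d1" "c2 \<bullet> x \<le> d2" using n1 n2 by (auto simp: isn_def)
    then have "m1 * (c1 \<bullet> x - d1) \<le> 0" "m2 * (c2 \<bullet> x - d2) \<le> 0" using m
      by (simp_all add: mult_nonneg_nonpos)
    then show "x \<in> {x. c \<bullet> x \<le> e}" using ce[of x] by simp
  qed
  have cv: "c \<bullet> v = e" using ce[of v] by (simp add: m1_def m2_def algebra_simps)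
  have PI: "P \<inter> {x. c \<bullet> x = e} = F1 \<inter> F2"
  proof
    show "P \<inter> {x. c \<bullet> x = e} \<subseteq> F1 \<inter> F2"
    proof
      fix x assume x: "x \<in> P \<inter> {x. c \<bullet> x = e}"
      then have le: "c1 \<bullet> x \<le> d1" "c2 \<bullet> x \<le> d2" using n1 n2 by (auto simp: isn_def)
      then have t: "m1 * (c1 \<bullet> x - d1) \<le> 0" "m2 * (c2 \<bullet> x - d2) \<le> 0" using m
        by (simp_all add: mult_nonneg_nonpos)
      have "m1 * (c1 \<bullet> x - d1) + m2 * (c2 \<bullet> x - d2) = 0" using ce[of x] x by simp
      then have "m1 * (c1 \<bullet> x - d1) = 0" "m2 * (c2 \<bullet> x - d2) = 0" using t by linarith+
      then have "c1 \<bullet> x = d1" "c2 \<bullet> x = d2" using m by auto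
      then show "x \<in> F1 \<inter> F2" using x n1 n2 by (auto simp: isn_def)
    qed
    show "F1 \<inter> F2 \<subseteq> P \<inter> {x. c \<bullet> x = e}"
    proof
      fix x assume "x \<in> F1 \<inter> F2"
      then have "x \<in> P" "c1 \<bullet> x = d1" "c2 \<bullet> x = d2" using n1 n2 by (auto simp: isn_def)
      then show "x \<in> P \<inter> {x. c \<bullet> x = e}" using ce[of x] by simp
    qed
  qed
  have eq: "QQ \<inter> {x. c \<bullet> x = e} = convex hull (insert v (F1 \<inter> F2))"
    using hull_cap(3)[OF convP Pne Ple _ cv] cv PI unfolding QQ_def by simp
  have Qle: "QQ \<subseteq> {x. c \<bullet> x \<le> e}" using hull_cap(1)[OF convP Pne Ple] cv unfolding QQ_def by simp
  have fc: "(QQ \<inter> {x. c \<bullet> x = e}) face_of QQ"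
    using face_of_Int_supporting_hyperplane_le[OF convQ, of c e] Qle by auto
  have "affine hull (F1 \<inter> F2) \<subseteq> affine hull F1" by (intro hull_mono) auto
  then have "v \<notin> affine hull (F1 \<inter> F2)" using isn_facet_aff[OF F1 n1] v1 by auto
  then have "aff_dim (convex hull (insert v (F1 \<inter> F2))) = int DIM('a) - 1"
    using dim by (simp add: aff_dim_insert aff_dim_convex_hull)
  then show ?thesis unfolding facet_of_def using eq fc dimQ by auto
qed

end



context fdpv begin

lemma ridge_split: assumes Kd: "K = P \<inter> {x. a \<bullet> x = b}" and Ple: "P \<subseteq> {x. a \<bullet> x \<le> b}"
  and av: "a \<bullet> v = b" and dK: "aff_dim K = int DIM('a) - 2" and vK: "v \<notin> affine hull K"
  shows "\<exists>F1 F2 c1 d1 c2 d2. F1 facet_of P \<and> F2 facet_of P \<and> isn F1 c1 d1 \<and> isn F2 c2 d2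
          \<and> c1 \<bullet> v > d1 \<and> c2 \<bullet> v \<le> d2 \<and> K = F1 \<inter> F2"
proof -
  have Kf: "K face_of P" using face_of_Int_supporting_hyperplane_le[OF convP, of a b] Ple Kd by auto
  have Kne: "K \<noteq> {}" using dK D3 by auto
  have "convex K" using face_of_imp_convex Kf by blast
  then obtain r where r: "r \<in> rel_interior K" using rel_interior_eq_empty Kne by blast
  have rK: "r \<in> K" using rel_interior_subset r by blast
  then have rP: "r \<in> P" "a \<bullet> r = b" using Kd by auto
  obtain H ah bh where H: "finite H" "P = \<Inter>H" "\<And>h. h \<in> H \<Longrightarrow> ah h \<noteq> 0 \<and> h = {x. ah h \<bullet> x \<le> bh h}"
    "\<And>h. h \<in> H \<Longrightarrow> (P \<inter> {x. ah h \<bullet> x = bh h}) facet_of P" using rep by blast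
  have hs: "\<And>h. h \<in> H \<Longrightarrow> h = {x. ah h \<bullet> x \<le> bh h}" using H(3) by blast
  have inaff: False if tw: "t > 0" "r + t *\<^sub>R w \<in> P" "a \<bullet> w = 0" "v = r + s *\<^sub>R w" for t s w
  proof -
    define y where "y = r + t *\<^sub>R w"
    have "a \<bullet> y = b" using tw rP by (simp add: y_def inner_add_right)
    then have yK: "y \<in> K" using tw Kd by (auto simp: y_def)
    have "v = (1 - s/t) *\<^sub>R r + (s/t) *\<^sub>R y" using tw by (simp add: y_def algebra_simps)
    moreover have "r \<in> affine hull K" "y \<in> affine hull K" using rK yK by (auto simp: hull_inc)
    ultimately have "v \<in> affine hull K" using mem_affine[OF affine_affine_hull, of r K y "1 - s/t" "s/t"] by simp
    then show False using vK by simp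
  qed
  have A: "\<exists>h\<in>H. ah h \<bullet> r = bh h \<and> ah h \<bullet> v > bh h"
  proof (rule ccontr)
    assume "\<not> ?thesis"
    then have "\<And>h. h \<in> H \<Longrightarrow> ah h \<bullet> r = bh h \<Longrightarrow> ah h \<bullet> (v - r) \<le> 0"
      by (auto simp: inner_diff_right)
    then obtain t where "t > 0" "r + t *\<^sub>R (v - r) \<in> P"
      using loc_move[OF H(1) H(2) hs rP(1)] by blast
    moreover have "a \<bullet> (v - r) = 0" using av rP by (simp add: inner_diff_right)
    ultimately show False using inaff[of t "v - r" 1] by simp
  qed
  have B: "\<exists>h\<in>H. ah h \<bullet> r = bh h \<and> ah h \<bullet> v \<le> bh h"
  proof (rule ccontr)
    assume "\<not> ?thesis"
    then have "\<And>h. h \<in> H \<Longrightarrow> ah h \<bullet> r = bh h \<Longrightarrow> ah h \<bullet> (r - v) \<le> 0"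
      by (auto simp: inner_diff_right)
    then obtain t where "t > 0" "r + t *\<^sub>R (r - v) \<in> P"
      using loc_move[OF H(1) H(2) hs rP(1)] by blast
    moreover have "a \<bullet> (r - v) = 0" using av rP by (simp add: inner_diff_right)
    ultimately show False using inaff[of t "r - v" "-1"] by simp
  qed
  obtain h1 where h1: "h1 \<in> H" "ah h1 \<bullet> r = bh h1" "ah h1 \<bullet> v > bh h1" using A by blast
  obtain h2 where h2: "h2 \<in> H" "ah h2 \<bullet> r = bh h2" "ah h2 \<bullet> v \<le> bh h2" using B by blast
  define F1 where "F1 = P \<inter> {x. ah h1 \<bullet> x = bh h1}"
  define F2 where "F2 = P \<inter> {x. ah h2 \<bullet> x = bh h2}"
  have F1: "F1 facet_of P" using H(4)[OF h1(1)] by (simp add: F1_def)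
  have F2: "F2 facet_of P" using H(4)[OF h2(1)] by (simp add: F2_def)
  have "P \<subseteq> h1" "P \<subseteq> h2" using H(2) h1(1) h2(1) by auto
  then have n1: "isn F1 (ah h1) (bh h1)" and n2: "isn F2 (ah h2) (bh h2)"
    using H(3)[OF h1(1)] H(3)[OF h2(1)] by (auto simp: isn_def F1_def F2_def)
  have rF: "r \<in> F1" "r \<in> F2" using rP h1 h2 by (auto simp: F1_def F2_def)
  have KP: "K \<subseteq> P" using Kd by auto
  have KF1: "K \<subseteq> F1" using subset_of_face_of[OF facet_of_imp_face_of[OF F1] KP] rF r by blast
  have KF2: "K \<subseteq> F2" using subset_of_face_of[OF facet_of_imp_face_of[OF F2] KP] rF r by blast
  have ne: "F1 \<noteq> F2"
  proof
    assume e: "F1 = F2"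
    have "v \<in> Hminus P F1" using FI(1)[OF F1 n1] h1 by simp
    then have "ah h2 \<bullet> v > bh h2" using FI(1)[OF F2 n2] e by simp
    then show False using h2 by simp
  qed
  have I: "(F1 \<inter> F2) face_of P" using face_of_Int F1 F2 facet_of_imp_face_of by blast
  have IF1: "(F1 \<inter> F2) face_of F1" using face_of_subset[OF I] F1 facet_of_imp_subset by blast
  have "F1 \<inter> F2 \<noteq> F1" using facet_sub_eq[OF F1 F2] ne by blast
  then have "aff_dim (F1 \<inter> F2) < aff_dim F1"
    using face_of_aff_dim_lt[OF face_of_imp_convex[OF facet_of_imp_face_of[OF F1]] IF1] by blast
  then have lt: "aff_dim (F1 \<inter> F2) < int DIM('a) - 1" using facet_dim[OF F1] by simp
  have KI: "K face_of (F1 \<inter> F2)" using face_of_subset[OF Kf] KF1 KF2 F1 facet_of_imp_subset by blast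
  have "K = F1 \<inter> F2"
  proof (rule ccontr)
    assume "K \<noteq> F1 \<inter> F2"
    then have "aff_dim K < aff_dim (F1 \<inter> F2)"
      using face_of_aff_dim_lt[OF face_of_imp_convex[OF I] KI] by blast
    then show False using lt dK by simp
  qed
  then show ?thesis using F1 F2 n1 n2 h1 h2 by blast
qed


lemma facet_cases: assumes G: "G facet_of QQ"
  shows "(G facet_of P \<and> (\<exists>a b. isn G a b \<and> a \<bullet> v < b))
   \<or> (\<exists>F a b. F facet_of P \<and> isn F a b \<and> a \<bullet> v = b \<and> G = convex hull (insert v F))
   \<or> (\<exists>F1 F2 c1 d1 c2 d2. F1 facet_of P \<and> F2 facet_of P \<and> isn F1 c1 d1 \<and> isn F2 c2 d2
        \<and> c1 \<bullet> v > d1 \<and> c2 \<bullet> v < d2 \<and> aff_dim (F1 \<inter> F2) = int DIM('a) - 2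
        \<and> G = convex hull (insert v (F1 \<inter> F2)))"
proof -
  obtain a b where ab: "a \<noteq> 0" "QQ \<subseteq> {x. a \<bullet> x \<le> b}" "G = QQ \<inter> {x. a \<bullet> x = b}"
    using facet_of_polyhedron[OF polyhQ G] by blast
  have Ple: "P \<subseteq> {x. a \<bullet> x \<le> b}" using ab PQ by blast
  have av: "a \<bullet> v \<le> b" using ab vQ by blast
  define K where "K = P \<inter> {x. a \<bullet> x = b}"
  have Kf: "K face_of P" using face_of_Int_supporting_hyperplane_le[OF convP, of a b] Ple K_def by auto
  have nK: "isn K a b" using ab(1) Ple by (simp add: isn_def K_def)
  have dG: "aff_dim G = int DIM('a) - 1" using G dimQ unfolding facet_of_def by auto
  have Gne: "G \<noteq> {}" using G unfolding facet_of_def by auto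
  show ?thesis
  proof (cases "a \<bullet> v < b")
    case True
    have "G = K" using hc(2)[OF nK av True] ab(3) K_def by simp
    then have "G facet_of P" using Kf Gne dG dimP by (auto simp: facet_of_def)
    then show ?thesis using True nK \<open>G = K\<close> by blast
  next
    case False
    then have av2: "a \<bullet> v = b" using av by simp
    have GK: "G = convex hull (insert v K)" using hc(3)[OF nK av av2] ab(3) K_def by simp
    have "aff_dim G = aff_dim (insert v K)" using GK by (simp add: aff_dim_convex_hull)
    then have dI: "aff_dim (insert v K) = int DIM('a) - 1" using dG by simp
    have KneP: "K \<noteq> P" using not_sub_hyp[OF ab(1)] K_def by auto
    have "aff_dim K < int DIM('a)" using face_of_aff_dim_lt[OF convP Kf KneP] dimP by simp
    moreover have "aff_dim K \<ge> int DIM('a) - 2" using dI by (auto simp: aff_dim_insert split: if_splits)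
    ultimately consider "aff_dim K = int DIM('a) - 1" | "aff_dim K = int DIM('a) - 2" by linarith
    then show ?thesis
    proof cases
      case 1
      have "K \<noteq> {}" using 1 D3 by auto
      then have KF: "K facet_of P" using Kf 1 dimP by (auto simp: facet_of_def)
      then show ?thesis using nK av2 GK by blast
    next
      case 2
      have vK: "v \<notin> affine hull K" using dI 2 by (auto simp: aff_dim_insert)
      obtain F1 F2 c1 d1 c2 d2 where R: "F1 facet_of P" "F2 facet_of P" "isn F1 c1 d1" "isn F2 c2 d2"
        "c1 \<bullet> v > d1" "c2 \<bullet> v \<le> d2" "K = F1 \<inter> F2"
        using ridge_split[OF K_def Ple av2 2 vK] by blast
      show ?thesis
      proof (cases "c2 \<bullet> v < d2")
        case True
        have "aff_dim (F1 \<inter> F2) = int DIM('a) - 2" using 2 R(7) by simp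
        moreover have "G = convex hull (insert v (F1 \<inter> F2))" using GK R(7) by simp
        ultimately have "\<exists>F1 F2 c1 d1 c2 d2. F1 facet_of P \<and> F2 facet_of P \<and> isn F1 c1 d1 \<and> isn F2 c2 d2
          \<and> c1 \<bullet> v > d1 \<and> c2 \<bullet> v < d2 \<and> aff_dim (F1 \<inter> F2) = int DIM('a) - 2
          \<and> G = convex hull (insert v (F1 \<inter> F2))" using R True by blast
        then show ?thesis by blast
      next
        case False
        then have c2v: "c2 \<bullet> v = d2" using R by simp
        define G' where "G' = convex hull (insert v F2)"
        have G'f: "G' facet_of QQ" using on_facet[OF R(2) R(4) c2v] G'_def by simp
        have GG: "G \<subseteq> G'" unfolding GK G'_def R(7) by (intro hull_mono) auto
        have GG': "G face_of G'"
          using face_of_subset[OF facet_of_imp_face_of[OF G] GG] facet_of_imp_subset[OF G'f] by blast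
        have "G = G'"
        proof (rule ccontr)
          assume "G \<noteq> G'"
          then have "aff_dim G < aff_dim G'"
            using face_of_aff_dim_lt[OF face_of_imp_convex[OF facet_of_imp_face_of[OF G'f]] GG'] by blast
          then show False using dG G'f dimQ by (auto simp: facet_of_def)
        qed
        then show ?thesis using R(2) R(4) c2v G'_def by blast
      qed
    qed
  qed
qed

end


lemma simplex_face_rep:
  fixes S :: "'a::euclidean_space set"
  assumes "n simplex S" "T face_of S"
  shows "\<exists>C'. \<not> affine_dependent C' \<and> finite C' \<and> T = convex hull C' \<and> int (card C') = aff_dim T + 1"
proof -
  obtain C where C: "finite C" "\<not> affine_dependent C" "int (card C) = n + 1" "S = convex hull C"
    using assms(1) unfolding simplex by blast
  have "\<exists>c. c \<subseteq> C \<and> T = convex hull c"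
    using face_of_convex_hull_affine_independent[OF C(2), of T] assms(2) C(4) by simp
  then obtain C' where C': "C' \<subseteq> C" "T = convex hull C'" by blast
  have i: "\<not> affine_dependent C'" using affine_independent_subset C(2) C'(1) by blast
  moreover have "finite C'" using C(1) C'(1) finite_subset by blast
  moreover have "int (card C') = aff_dim T + 1"
    using aff_dim_affine_independent[OF i] C'(2) by (simp add: aff_dim_convex_hull)
  ultimately show ?thesis using C' by blast
qed

lemma simplex_face_simplex:
  fixes S :: "'a::euclidean_space set"
  assumes "n simplex S" "T face_of S" "aff_dim T = m"
  shows "m simplex T"
proof -
  obtain C' where "\<not> affine_dependent C'" "T = convex hull C'" "int (card C') = aff_dim T + 1"
    using simplex_face_rep[OF assms(1,2)] by blast
  then show ?thesis using assms(3) simplex_convex_hull[of C' m] by simp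
qed

lemma simplex_facets_int:
  fixes S :: "'a::euclidean_space set"
  assumes S: "n simplex S" and A: "A face_of S" and B: "B face_of S"
    and dA: "aff_dim A = n - 1" and dB: "aff_dim B = n - 1" and AB: "A \<noteq> B"
  shows "aff_dim (A \<inter> B) = n - 2"
proof -
  obtain C where C: "finite C" "\<not> affine_dependent C" "int (card C) = n + 1" "S = convex hull C"
    using S unfolding simplex by blast
  have "\<exists>c. c \<subseteq> C \<and> A = convex hull c"
    using face_of_convex_hull_affine_independent[OF C(2), of A] A C(4) by simp
  then obtain CA where CA: "CA \<subseteq> C" "A = convex hull CA" by blast
  have "\<exists>c. c \<subseteq> C \<and> B = convex hull c"
    using face_of_convex_hull_affine_independent[OF C(2), of B] B C(4) by simp
  then obtain CB where CB: "CB \<subseteq> C" "B = convex hull CB" by blast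
  have iA: "\<not> affine_dependent CA" using affine_independent_subset C(2) CA(1) by blast
  have iB: "\<not> affine_dependent CB" using affine_independent_subset C(2) CB(1) by blast
  have fA: "finite CA" "finite CB" using C(1) CA(1) CB(1) finite_subset by blast+
  have cA: "int (card CA) = n" using aff_dim_affine_independent[OF iA] CA(2) dA by (simp add: aff_dim_convex_hull)
  have cB: "int (card CB) = n" using aff_dim_affine_independent[OF iB] CB(2) dB by (simp add: aff_dim_convex_hull)
  have "card (CA \<union> CB) \<le> card C" using CA(1) CB(1) C(1) by (intro card_mono) auto
  moreover have "card (CA \<union> CB) + card (CA \<inter> CB) = card CA + card CB" using card_Un_Int[OF fA(1) fA(2)] by simp
  ultimately have cI: "int (card (CA \<inter> CB)) \<ge> n - 1" using cA cB C(3) by linarith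
  have iI: "\<not> affine_dependent (CA \<inter> CB)" using affine_independent_subset iA by blast
  have adc: "aff_dim (convex hull (CA \<inter> CB)) = int (card (CA \<inter> CB)) - 1"
    using aff_dim_affine_independent[OF iI] by (simp add: aff_dim_convex_hull)
  have "convex hull (CA \<inter> CB) \<subseteq> A" unfolding CA(2) by (rule hull_mono) blast
  moreover have "convex hull (CA \<inter> CB) \<subseteq> B" unfolding CB(2) by (rule hull_mono) blast
  ultimately have "convex hull (CA \<inter> CB) \<subseteq> A \<inter> B" by blast
  then have "aff_dim (convex hull (CA \<inter> CB)) \<le> aff_dim (A \<inter> B)" by (meson aff_dim_subset)
  then have ge: "aff_dim (A \<inter> B) \<ge> n - 2" using cI adc by linarith
  have IS: "(A \<inter> B) face_of S" using face_of_Int A B by blast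
  have IA: "(A \<inter> B) face_of A" using face_of_subset[OF IS] A face_of_imp_subset by blast
  have "A \<inter> B \<noteq> A"
  proof
    assume "A \<inter> B = A"
    then have "A \<subseteq> B" by blast
    then have "A face_of B" using face_of_subset[OF A] B face_of_imp_subset by blast
    then have "aff_dim A < aff_dim B" using face_of_aff_dim_lt[OF face_of_imp_convex[OF B]] AB by blast
    then show False using dA dB by simp
  qed
  then have "aff_dim (A \<inter> B) < aff_dim A" using face_of_aff_dim_lt[OF face_of_imp_convex[OF A] IA] by blast
  then show ?thesis using ge dA by simp
qed

context fdp begin

lemma facet_of_facet: assumes F: "F facet_of P" and T: "T facet_of F"
  shows "\<exists>G. G facet_of P \<and> G \<noteq> F \<and> T = F \<inter> G"
proof -
  have TP: "T face_of P" using face_of_trans facet_of_imp_face_of T F by blast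
  have Tne: "T \<noteq> {}" using T facet_of_def by auto
  have dT: "aff_dim T = int DIM('a) - 2" using T facet_dim[OF F] unfolding facet_of_def by auto
  have "T \<noteq> P" using dT dimP by auto
  then have Teq: "T = \<Inter>{G. G facet_of P \<and> T \<subseteq> G}" using face_of_polyhedron[OF polyhP TP Tne] by blast
  have TF: "T \<subseteq> F" using T facet_of_imp_subset by blast
  obtain G where G: "G facet_of P" "T \<subseteq> G" "G \<noteq> F"
  proof (rule ccontr)
    assume "\<not> thesis"
    then have "{G. G facet_of P \<and> T \<subseteq> G} = {F}" using F TF that by blast
    then have "T = F" using Teq by simp
    then show False using dT facet_dim[OF F] by simp
  qed
  have I: "(F \<inter> G) face_of P" using face_of_Int F G(1) facet_of_imp_face_of by blast
  have IF: "(F \<inter> G) face_of F" using face_of_subset[OF I] F facet_of_imp_subset by blast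
  have "F \<inter> G \<noteq> F" using facet_sub_eq[OF F G(1)] G(3) by blast
  then have lt: "aff_dim (F \<inter> G) < int DIM('a) - 1"
    using face_of_aff_dim_lt[OF face_of_imp_convex[OF facet_of_imp_face_of[OF F]] IF] facet_dim[OF F] by simp
  have TI: "T face_of (F \<inter> G)" using face_of_subset[OF TP] TF G(2) I face_of_imp_subset by blast
  have "T = F \<inter> G"
  proof (rule ccontr)
    assume "T \<noteq> F \<inter> G"
    then have "aff_dim T < aff_dim (F \<inter> G)" using face_of_aff_dim_lt[OF face_of_imp_convex[OF I] TI] by blast
    then show False using lt dT by simp
  qed
  then show ?thesis using G by blast
qed

lemma restrict_fi: assumes D: "DIM('a) \<ge> 3" and F: "F facet_of P" and G: "G facet_of P" and FG: "F \<noteq> G"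
  and dI: "aff_dim (F \<inter> G) = int DIM('a) - 2" and fi: "facet_ineq P G a b"
  shows "facet_ineq F (F \<inter> G) a b"
proof -
  have a: "a \<noteq> 0" "P \<subseteq> {x. a \<bullet> x \<ge> b}" "{x. a \<bullet> x = b} = affine hull G"
    using fi affP unfolding facet_ineq_def by auto
  define L where "L = affine hull F \<inter> {x. a \<bullet> x = b}"
  have affL: "affine L" unfolding L_def by (intro affine_Int affine_hyperplane affine_affine_hull)
  have sub1: "affine hull (F \<inter> G) \<subseteq> L"
    unfolding L_def a(3) by (intro Int_greatest hull_mono) auto
  have Ine: "F \<inter> G \<noteq> {}" using dI D by auto
  have LF: "L \<subseteq> affine hull F" unfolding L_def by blast
  have "L \<noteq> affine hull F"
  proof
    assume "L = affine hull F"
    then have "affine hull F \<subseteq> affine hull G" unfolding L_def a(3) by blast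
    moreover have "G = affine hull G \<inter> P"
      using face_of_imp_eq_affine_Int[OF convP] G facet_of_imp_face_of by blast
    moreover have "F \<subseteq> affine hull F" by (rule hull_subset)
    moreover have "F \<subseteq> P" using F facet_of_imp_subset by blast
    ultimately have "F \<subseteq> G" by blast
    then show False using facet_sub_eq[OF F G] FG by blast
  qed
  have "aff_dim L \<noteq> aff_dim (affine hull F)"
  proof
    assume ad: "aff_dim L = aff_dim (affine hull F)"
    have "affine hull (F \<inter> G) \<noteq> {}" using Ine by simp
    then have "L \<noteq> {}" using sub1 by blast
    then have "L = affine hull F" using affine_dim_equal[OF affL affine_affine_hull _ LF ad] by blast
    then show False using \<open>L \<noteq> affine hull F\<close> by simp
  qed
  moreover have "aff_dim L \<le> aff_dim (affine hull F)" using LF by (meson aff_dim_subset)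
  ultimately have "aff_dim L \<le> int DIM('a) - 2" using facet_dim[OF F] by simp
  moreover have "aff_dim (affine hull (F \<inter> G)) \<le> aff_dim L" using sub1 by (meson aff_dim_subset)
  ultimately have "aff_dim (affine hull (F \<inter> G)) = aff_dim L" using dI by simp
  then have "affine hull (F \<inter> G) = L"
    using affine_dim_equal[OF affine_affine_hull affL _ sub1] Ine by auto
  then have e: "affine hull F \<inter> {x. a \<bullet> x = b} = affine hull (F \<inter> G)" unfolding L_def by simp
  have "F \<subseteq> {x. a \<bullet> x \<ge> b}" using a(2) F facet_of_imp_subset by blast
  then show ?thesis unfolding facet_ineq_def using e a(1) by blast
qed

end

context fdpv begin

lemma rel_int_in: assumes X: "X facet_of P" and n: "isn X a b" and av: "a \<bullet> v > b"
  shows "rel_interior X \<subseteq> interior QQ"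
proof
  fix x assume x: "x \<in> rel_interior X"
  have xX: "x \<in> X" using x rel_interior_subset by blast
  have XP: "X \<subseteq> P" using X facet_of_imp_subset by blast
  have xQ: "x \<in> QQ" using xX XP PQ by blast
  have affQ: "affine hull QQ = UNIV" using dimQ aff_dim_eq_full by auto
  show "x \<in> interior QQ"
  proof (rule ccontr)
    assume "x \<notin> interior QQ"
    then have nri: "x \<notin> rel_interior QQ" using rel_interior_interior[OF affQ] by simp
    have "\<exists>c. c \<noteq> 0 \<and> (\<forall>y\<in>QQ. c \<bullet> x \<le> c \<bullet> y)"
      by (rule supporting_hyperplane_rel_boundary[OF convQ xQ nri]) auto
    then obtain c where c: "c \<noteq> 0" "\<And>y. y \<in> QQ \<Longrightarrow> c \<bullet> x \<le> c \<bullet> y" by blast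
    define a' where "a' = - c"
    define b' where "b' = - (c \<bullet> x)"
    have Qle: "QQ \<subseteq> {y. a' \<bullet> y \<le> b'}"
    proof
      fix y assume "y \<in> QQ"
      then have "c \<bullet> x \<le> c \<bullet> y" using c(2) by blast
      then show "y \<in> {y. a' \<bullet> y \<le> b'}" by (simp add: a'_def b'_def)
    qed
    have a'0: "a' \<noteq> 0" using c by (simp add: a'_def)
    define K where "K = P \<inter> {y. a' \<bullet> y = b'}"
    have Ple: "P \<subseteq> {y. a' \<bullet> y \<le> b'}" using Qle PQ by blast
    have Kf: "K face_of P" unfolding K_def by (rule face_of_Int_supporting_hyperplane_le[OF convP]) (use Ple in blast)
    have KP': "K \<subseteq> P" unfolding K_def by blast
    have xK: "x \<in> K" using xX XP unfolding K_def a'_def b'_def by auto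
    have "K \<inter> rel_interior X \<noteq> {}" using xK x by blast
    then have XK: "X \<subseteq> K" using subset_of_face_of[OF Kf XP] by blast
    have KP: "K \<noteq> P"
    proof
      assume "K = P" then have "P \<subseteq> {y. a' \<bullet> y = b'}" unfolding K_def by blast
      then show False using not_sub_hyp[OF a'0] by blast
    qed
    have "aff_dim K < int DIM('a)" using face_of_aff_dim_lt[OF convP Kf KP] dimP by simp
    have XKf: "X face_of K" using face_of_subset[OF facet_of_imp_face_of[OF X] XK KP'] .
    have "X = K"
    proof (rule ccontr)
      assume "X \<noteq> K"
      then have "aff_dim X < aff_dim K" using face_of_aff_dim_lt[OF face_of_imp_convex[OF Kf] XKf] by blast
      then show False using \<open>aff_dim K < int DIM('a)\<close> facet_dim[OF X] by simp
    qed
    then have XK2: "X = P \<inter> {y. a' \<bullet> y = b'}" using K_def by simp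
    have n': "isn X a' b'" unfolding isn_def using a'0 Ple XK2 by simp
    have "v \<in> Hminus P X" using FI(1)[OF X n] av by simp
    then have "a' \<bullet> v > b'" using FI(1)[OF X n'] by simp
    moreover have "a' \<bullet> v \<le> b'" using Qle vQ by blast
    ultimately show False by simp
  qed
qed

end


theorem proposition2p9:
  fixes P S Q :: "'a::euclidean_space set" and \<F> \<N> :: "'a set set" and v :: 'a
  assumes "polytope P" and "aff_dim P = int DIM('a)" and "DIM('a) \<ge> 3"
    and "simplex_facet P S" and "bounded_position P S"
    and "\<F> \<subseteq> adj P S" and "\<N> \<subseteq> adj P S" and "\<F> \<inter> \<N> = {}"
    and "nonsimple P S \<F>"
    and "v \<in> Vregion P S \<F> \<N>"
    and "Q = convex hull (insert v P)"
  shows "(rel_interior S \<subseteq> interior Q \<and> (\<forall>N\<in>\<N>. rel_interior N \<subseteq> interior Q))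
    \<and> {G. G facet_of Q} =
           {F. F facet_of P \<and> F \<notin> {S} \<union> \<N> \<union> \<F>}
         \<union> {convex hull (insert v (S \<inter> F)) | F. F \<in> adj P S - (\<F> \<union> \<N>)}
         \<union> {convex hull (insert v (N \<inter> F)) | N F. N \<in> \<N> \<and> F facet_of P
               \<and> F \<notin> \<F> \<union> \<N> \<union> {S} \<and> adjacent_facets P N F}
         \<union> {convex hull (insert v F) | F. F \<in> \<F>}
    \<and> (\<forall>F\<in>\<F>. pseudo_stacking F (S \<inter> F) {}
               {N \<inter> F | N. N \<in> \<N> \<and> N \<inter> F facet_of F} v (convex hull (insert v F)))"
proof -
  interpret fdpv P v using assms(1,2,3) by unfold_locales auto
  have QQ: "Q = QQ" using assms(11) QQ_def by simp
  have S: "S facet_of P" and Ssimp: "(aff_dim P - 1) simplex S"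
    using assms(4) unfolding simplex_facet_def by auto
  have adjD: "X facet_of P" "aff_dim (S \<inter> X) = int DIM('a) - 2" if "X \<in> adj P S" for X
    using that dimP unfolding adj_def adjacent_facets_def by auto
  have SnA: "S \<notin> adj P S"
  proof
    assume "S \<in> adj P S"
    then have "aff_dim (S \<inter> S) = int DIM('a) - 2" by (rule adjD(2))
    then have "aff_dim S = int DIM('a) - 2" by simp
    then show False using facet_dim[OF S] by simp
  qed
  have FA: "X \<in> adj P S" if "X \<in> \<F>" for X using assms(6) that by blast
  have NA: "X \<in> adj P S" if "X \<in> \<N>" for X using assms(7) that by blast
  have vR: "v \<in> Vregion P S \<F> \<N>" by fact
  have vS: "v \<in> Hminus P S" using vR unfolding Vregion_def by blast
  have vN: "v \<in> Hminus P N" if "N \<in> \<N>" for N using vR that unfolding Vregion_def by blast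
  have vF: "v \<in> affine hull F" if "F \<in> \<F>" for F using vR that unfolding Vregion_def by blast
  have vO: "v \<in> Hplus P F" if "F facet_of P" "F \<notin> \<N> \<union> \<F> \<union> {S}" for F
    using vR that unfolding Vregion_def by blast
  have cl_beyond: "a \<bullet> v > b" if "F facet_of P" "isn F a b" "F = S \<or> F \<in> \<N>" for F a b
    using FI(1)[OF that(1,2)] vS vN that(3) by blast
  have cl_on: "a \<bullet> v = b" if "F facet_of P" "isn F a b" "F \<in> \<F>" for F a b
    using FI(3)[OF that(1,2)] vF that(3) by blast
  have cl_ben: "a \<bullet> v < b" if "F facet_of P" "isn F a b" "F \<notin> \<N> \<union> \<F> \<union> {S}" for F a b
    using FI(2)[OF that(1,2)] vO[OF that(1,3)] by blast
  have inv_beyond: "F = S \<or> F \<in> \<N>" if "F facet_of P" "isn F a b" "a \<bullet> v > b" for F a b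
  proof (rule ccontr)
    assume c: "\<not> (F = S \<or> F \<in> \<N>)"
    show False
    proof (cases "F \<in> \<F>")
      case True then show False using cl_on[OF that(1,2)] that(3) by simp
    next
      case False then show False using cl_ben[OF that(1,2)] c that(3) by auto
    qed
  qed
  have inv_on: "F \<in> \<F>" if "F facet_of P" "isn F a b" "a \<bullet> v = b" for F a b
  proof (rule ccontr)
    assume c: "F \<notin> \<F>"
    show False
    proof (cases "F = S \<or> F \<in> \<N>")
      case True then show False using cl_beyond[OF that(1,2)] that(3) by simp
    next
      case False then show False using cl_ben[OF that(1,2)] c that(3) by auto
    qed
  qed
  have inv_ben: "F \<notin> \<N> \<union> \<F> \<union> {S}" if "F facet_of P" "isn F a b" "a \<bullet> v < b" for F a b
    using cl_beyond[OF that(1,2)] cl_on[OF that(1,2)] that(3) by fastforce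
  have p1: "rel_interior S \<subseteq> interior Q \<and> (\<forall>N\<in>\<N>. rel_interior N \<subseteq> interior Q)"
  proof (intro conjI ballI)
    obtain a b where n: "isn S a b" using nrm_ex[OF S] by blast
    show "rel_interior S \<subseteq> interior Q" using rel_int_in[OF S n cl_beyond[OF S n]] QQ by simp
  next
    fix N assume N: "N \<in> \<N>"
    have Nf: "N facet_of P" using adjD(1)[OF NA[OF N]] .
    obtain a b where n: "isn N a b" using nrm_ex[OF Nf] by blast
    show "rel_interior N \<subseteq> interior Q" using rel_int_in[OF Nf n cl_beyond[OF Nf n]] N QQ by simp
  qed
  have p2: "{G. G facet_of Q} =
           {F. F facet_of P \<and> F \<notin> {S} \<union> \<N> \<union> \<F>}
         \<union> {convex hull (insert v (S \<inter> F)) | F. F \<in> adj P S - (\<F> \<union> \<N>)}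
         \<union> {convex hull (insert v (N \<inter> F)) | N F. N \<in> \<N> \<and> F facet_of P
               \<and> F \<notin> \<F> \<union> \<N> \<union> {S} \<and> adjacent_facets P N F}
         \<union> {convex hull (insert v F) | F. F \<in> \<F>}" (is "_ = ?A \<union> ?B \<union> ?C \<union> ?D")
  proof (intro equalityI subsetI)
    fix G assume "G \<in> {G. G facet_of Q}"
    then have G: "G facet_of QQ" using QQ by simp
    show "G \<in> ?A \<union> ?B \<union> ?C \<union> ?D"
    using facet_cases[OF G]
    proof (elim disjE exE conjE)
      fix a b assume "G facet_of P" "isn G a b" "a \<bullet> v < b"
      then have "G \<in> ?A" using inv_ben by blast
      then show ?thesis by blast
    next
      fix F a b assume "F facet_of P" "isn F a b" "a \<bullet> v = b" "G = convex hull (insert v F)"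
      then have "G \<in> ?D" using inv_on by blast
      then show ?thesis by blast
    next
      fix F1 F2 c1 d1 c2 d2 assume R: "F1 facet_of P" "F2 facet_of P" "isn F1 c1 d1" "isn F2 c2 d2"
        "d1 < c1 \<bullet> v" "c2 \<bullet> v < d2" "aff_dim (F1 \<inter> F2) = int DIM('a) - 2"
        "G = convex hull (insert v (F1 \<inter> F2))"
      have b1: "F1 = S \<or> F1 \<in> \<N>" using inv_beyond[OF R(1,3,5)] .
      have b2: "F2 \<notin> \<N> \<union> \<F> \<union> {S}" using inv_ben[OF R(2,4,6)] .
      have adjF: "adjacent_facets P F1 F2" using R(1,2,7) dimP unfolding adjacent_facets_def by simp
      show ?thesis
      proof (cases "F1 = S")
        case True
        then have "F2 \<in> adj P S - (\<F> \<union> \<N>)" using adjF b2 unfolding adj_def by auto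
        then have "G \<in> ?B" using R(8) True by blast
        then show ?thesis by blast
      next
        case False
        then have "F1 \<in> \<N>" using b1 by simp
        then have "G \<in> ?C" using R(2,8) b2 adjF by blast
        then show ?thesis by blast
      qed
    qed
  next
    fix G assume "G \<in> ?A \<union> ?B \<union> ?C \<union> ?D"
    then have "G facet_of QQ"
    proof (elim UnE)
      assume "G \<in> ?A"
      then have Gf: "G facet_of P" and Gn: "G \<notin> \<N> \<union> \<F> \<union> {S}" by auto
      obtain a b where n: "isn G a b" using nrm_ex[OF Gf] by blast
      show ?thesis using beneath_facet[OF Gf n cl_ben[OF Gf n Gn]] .
    next
      assume "G \<in> ?B"
      then obtain F where F: "F \<in> adj P S" "F \<notin> \<F> \<union> \<N>" "G = convex hull (insert v (S \<inter> F))" by blast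
      have Ff: "F facet_of P" using adjD(1)[OF F(1)] .
      have "F \<noteq> S" using F(1) SnA by blast
      then have Fn: "F \<notin> \<N> \<union> \<F> \<union> {S}" using F(2) by blast
      obtain cs ds where ns: "isn S cs ds" using nrm_ex[OF S] by blast
      obtain cf df where nf: "isn F cf df" using nrm_ex[OF Ff] by blast
      show ?thesis using ridge_facet[OF S Ff ns nf cl_beyond[OF S ns] cl_ben[OF Ff nf Fn] adjD(2)[OF F(1)]] F(3)
        by simp
    next
      assume "G \<in> ?C"
      then obtain N F where NF: "N \<in> \<N>" "F facet_of P" "F \<notin> \<F> \<union> \<N> \<union> {S}" "adjacent_facets P N F"
        "G = convex hull (insert v (N \<inter> F))" by blast
      have Nf: "N facet_of P" using adjD(1)[OF NA[OF NF(1)]] .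
      have Fn: "F \<notin> \<N> \<union> \<F> \<union> {S}" using NF(3) by blast
      have dNF: "aff_dim (N \<inter> F) = int DIM('a) - 2" using NF(4) dimP unfolding adjacent_facets_def by simp
      obtain cn dn where nn: "isn N cn dn" using nrm_ex[OF Nf] by blast
      obtain cf df where nf: "isn F cf df" using nrm_ex[OF NF(2)] by blast
      show ?thesis using ridge_facet[OF Nf NF(2) nn nf cl_beyond[OF Nf nn] cl_ben[OF NF(2) nf Fn] dNF] NF(1,5)
        by simp
    next
      assume "G \<in> ?D"
      then obtain F where F: "F \<in> \<F>" "G = convex hull (insert v F)" by blast
      have Ff: "F facet_of P" using adjD(1)[OF FA[OF F(1)]] .
      obtain a b where n: "isn F a b" using nrm_ex[OF Ff] by blast
      show ?thesis using on_facet[OF Ff n cl_on[OF Ff n F(1)]] F(2) by simp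
    qed
    then show "G \<in> {G. G facet_of Q}" using QQ by simp
  qed
  have KD: "S \<inter> X \<noteq> S \<inter> Y \<and> aff_dim ((S \<inter> X) \<inter> (S \<inter> Y)) = int DIM('a) - 3"
    if XY: "X \<in> adj P S" "Y \<in> adj P S" "X \<noteq> Y" for X Y
  proof -
    have Xf: "X facet_of P" and Yf: "Y facet_of P" using adjD(1) XY by auto
    have XS: "S \<noteq> X" using XY(1) SnA by blast
    have YS: "S \<noteq> Y" using XY(2) SnA by blast
    have D2: "DIM('a) \<ge> 2" using D3 by simp
    have ne: "S \<inter> X \<noteq> S \<inter> Y"
    proof
      assume eq: "S \<inter> X = S \<inter> Y"
      show False by (rule three_facets[OF D2 S Xf Yf XS YS XY(3) eq adjD(2)[OF XY(1)]])
    qed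
    have fX: "(S \<inter> X) face_of S"
      using face_of_subset[OF face_of_Int[OF facet_of_imp_face_of[OF S] facet_of_imp_face_of[OF Xf]]]
        facet_of_imp_subset[OF S] by blast
    have fY: "(S \<inter> Y) face_of S"
      using face_of_subset[OF face_of_Int[OF facet_of_imp_face_of[OF S] facet_of_imp_face_of[OF Yf]]]
        facet_of_imp_subset[OF S] by blast
    have "aff_dim ((S \<inter> X) \<inter> (S \<inter> Y)) = (aff_dim P - 1) - 2"
      using simplex_facets_int[OF Ssimp fX fY _ _ ne] adjD(2)[OF XY(1)] adjD(2)[OF XY(2)] dimP by simp
    then show ?thesis using ne dimP by simp
  qed
  have p3: "pseudo_stacking F (S \<inter> F) {}
               {N \<inter> F | N. N \<in> \<N> \<and> N \<inter> F facet_of F} v (convex hull (insert v F))"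
    if F: "F \<in> \<F>" for F
  proof -
    define NF where "NF = {N \<inter> F | N. N \<in> \<N> \<and> N \<inter> F facet_of F}"
    have FadS: "F \<in> adj P S" using FA[OF F] .
    have Ff: "F facet_of P" using adjD(1)[OF FadS] .
    have dSF: "aff_dim (S \<inter> F) = int DIM('a) - 2" using adjD(2)[OF FadS] .
    have FS: "F \<noteq> S" using FadS SnA by blast
    have SFP: "(S \<inter> F) face_of P" using face_of_Int S Ff facet_of_imp_face_of by blast
    have SFF: "(S \<inter> F) face_of F" using face_of_subset[OF SFP] Ff facet_of_imp_subset by blast
    have SFS: "(S \<inter> F) face_of S" using face_of_subset[OF SFP] S facet_of_imp_subset by blast
    have SFne: "S \<inter> F \<noteq> {}" using dSF D3 by auto
    have SFfacet: "(S \<inter> F) facet_of F" unfolding facet_of_def using SFF SFne dSF facet_dim[OF Ff] by simp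
    have polF: "polytope F" using face_of_polytope_polytope[OF polyP facet_of_imp_face_of[OF Ff]] .
    have simpF: "simplex_facet F (S \<inter> F)" unfolding simplex_facet_def
      using SFfacet simplex_face_simplex[OF Ssimp SFS] dSF facet_dim[OF Ff] by simp
    have NFadj: "NF \<subseteq> adj F (S \<inter> F)"
    proof
      fix X assume "X \<in> NF"
      then obtain N where N: "N \<in> \<N>" "X = N \<inter> F" "(N \<inter> F) facet_of F" unfolding NF_def by blast
      have "F \<noteq> N" using N(1) F assms(8) by blast
      then have "aff_dim ((S \<inter> F) \<inter> (S \<inter> N)) = int DIM('a) - 3" using KD[OF FadS NA[OF N(1)]] by blast
      moreover have "(S \<inter> F) \<inter> (N \<inter> F) = (S \<inter> F) \<inter> (S \<inter> N)" by blast
      ultimately have "aff_dim ((S \<inter> F) \<inter> (N \<inter> F)) = aff_dim F - 2" using facet_dim[OF Ff] by simp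
      then show "X \<in> adj F (S \<inter> F)" unfolding adj_def adjacent_facets_def using SFfacet N by simp
    qed
    have hm: "v \<in> Hminus F (F \<inter> G)" if G: "G facet_of P" "G \<noteq> F" "aff_dim (F \<inter> G) = int DIM('a) - 2"
      "v \<in> Hminus P G" for G
    proof -
      obtain a b where ab: "facet_ineq P G a b" "a \<bullet> v < b" using G(4) unfolding Hminus_def by blast
      have "facet_ineq F (F \<inter> G) a b" using restrict_fi[OF D3 Ff G(1) G(2)[symmetric] G(3) ab(1)] .
      then show ?thesis unfolding Hminus_def using ab(2) vF[OF F] by blast
    qed
    have hp: "v \<in> Hplus F (F \<inter> G)" if G: "G facet_of P" "G \<noteq> F" "aff_dim (F \<inter> G) = int DIM('a) - 2"
      "v \<in> Hplus P G" for G
    proof -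
      obtain a b where ab: "facet_ineq P G a b" "a \<bullet> v > b" using G(4) unfolding Hplus_def by blast
      have "facet_ineq F (F \<inter> G) a b" using restrict_fi[OF D3 Ff G(1) G(2)[symmetric] G(3) ab(1)] .
      then show ?thesis unfolding Hplus_def using ab(2) vF[OF F] by blast
    qed
    have V1: "v \<in> Hminus F X" if X: "X \<in> NF \<union> {S \<inter> F}" for X
    proof (cases "X = S \<inter> F")
      case True
      have "F \<inter> S = S \<inter> F" by blast
      then show ?thesis using hm[OF S FS[symmetric]] dSF vS True by simp
    next
      case False
      then obtain N where N: "N \<in> \<N>" "X = N \<inter> F" "(N \<inter> F) facet_of F" using X unfolding NF_def by blast
      have Nf: "N facet_of P" using adjD(1)[OF NA[OF N(1)]] .
      have "F \<noteq> N" using N(1) F assms(8) by blast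
      have "aff_dim (N \<inter> F) = int DIM('a) - 2" using N(3) facet_dim[OF Ff] unfolding facet_of_def by simp
      moreover have "F \<inter> N = N \<inter> F" by blast
      ultimately show ?thesis using hm[OF Nf \<open>F \<noteq> N\<close>[symmetric]] vN[OF N(1)] N(2) by simp
    qed
    have V2: "v \<in> Hplus F T" if T: "T facet_of F" "T \<notin> NF \<union> {} \<union> {S \<inter> F}" for T
    proof -
      obtain G where G: "G facet_of P" "G \<noteq> F" "T = F \<inter> G" using facet_of_facet[OF Ff T(1)] by blast
      have dT: "aff_dim (F \<inter> G) = int DIM('a) - 2" using T(1) G(3) facet_dim[OF Ff] unfolding facet_of_def by simp
      have "G \<noteq> S" using T(2) G(3) by blast
      moreover have "G \<notin> \<N>"
      proof
        assume "G \<in> \<N>"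
        moreover have "G \<inter> F = T" using G(3) by blast
        ultimately have "T \<in> NF" using T(1) unfolding NF_def by blast
        then show False using T(2) by blast
      qed
      moreover have "G \<notin> \<F>"
      proof
        assume GF: "G \<in> \<F>"
        have GadS: "G \<in> adj P S" using FA[OF GF] .
        have kd: "aff_dim ((S \<inter> F) \<inter> (S \<inter> G)) = int DIM('a) - 3" using KD[OF FadS GadS G(2)[symmetric]] by blast
        define K where "K = (S \<inter> F) \<inter> (S \<inter> G)"
        have KP: "K face_of P" unfolding K_def
          using face_of_Int[OF SFP face_of_Int[OF facet_of_imp_face_of[OF S] facet_of_imp_face_of[OF G(1)]]] .
        have "K face_of F" using face_of_subset[OF KP _ facet_of_imp_subset[OF Ff]] unfolding K_def by blast
        moreover have "K face_of G" using face_of_subset[OF KP _ facet_of_imp_subset[OF G(1)]] unfolding K_def by blast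
        moreover have "K face_of S" using face_of_subset[OF KP _ facet_of_imp_subset[OF S]] unfolding K_def by blast
        moreover have "aff_dim K = aff_dim P - 3" using kd dimP unfolding K_def by simp
        moreover have "adjacent_facets P F G" unfolding adjacent_facets_def using Ff G(1) dT dimP by simp
        ultimately show False using assms(9) F GF unfolding nonsimple_def by blast
      qed
      ultimately have "G \<notin> \<N> \<union> \<F> \<union> {S}" by blast
      then show ?thesis using hp[OF G(1) G(2) dT vO[OF G(1)]] G(3) by simp
    qed
    have "v \<in> Vregion F (S \<inter> F) {} NF"
      unfolding Vregion_def using vF[OF F] V1 V2 by blast
    then show ?thesis unfolding pseudo_stacking_def NF_def[symmetric]
      using polF simpF NFadj by simp
  qed
  show ?thesis using p1 p2 p3 by blast
qed


end
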